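(* Let $\mathcal{L}$ be a nonempty set, let $\langle \mathcal{M}, \models, f\rangle$ be an fC-model for $\mathcal{L}$, and define $\mathcal{C}: 2^{\mathcal{L}} \to 2^{\mathcal{L}}$ by $\mathcal{C}(A) = \overline{f(\widehat{A})}$ for all $A \subseteq \mathcal{L}$. Then $\mathcal{C}$ is a C-logics, i.e. it satisfies Inclusion ($A \subseteq \mathcal{C}(A)$ for all $A\subseteq\mathcal{L}$) and Cumulativity (for all $A, B \subseteq \mathcal{L}$, $A \subseteq B \subseteq \mathcal{C}(A)$ implies $\mathcal{C}(A) = \mathcal{C}(B)$).
   Context: $\mathcal{L}$ is an arbitrary nonempty set (of "propositions"), with no structure assumed. An fC-model for $\mathcal{L}$ is a triple $\langle \mathcal{M}, \models, f\rangle$ where $\mathcal{M}$ is any set, $\models \subseteq \mathcal{M}\times\mathcal{L}$ is any binary relation, and $f: 2^{\mathcal{M}} \to 2^{\mathcal{M}}$ is a function defined on all subsets of $\mathcal{M}$ satisfying, for all $X, Y \subseteq \mathcal{M}$: Contraction $f(X) \subseteq X$, and Local Cumulativity: $f(X) \subseteq Y \subseteq X \Rightarrow f(Y) = f(X)$. For $A \subseteq \mathcal{L}$, $\widehat{A} = \{x \in \mathcal{M} : x \models a \text{ for all } a \in A\}$; for $X \subseteq \mathcal{M}$, $\overline{X} = \{a \in \mathcal{L} : x \models a \text{ for all } x \in X\}$. *)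

theory Defs
  imports Main
begin

definition hat :: "'m set \<Rightarrow> ('m \<times> 'l) set \<Rightarrow> 'l set \<Rightarrow> 'm set" where
  "hat M sat A = {x \<in> M. \<forall>a\<in>A. (x, a) \<in> sat}"

definition bar :: "'l set \<Rightarrow> ('m \<times> 'l) set \<Rightarrow> 'm set \<Rightarrow> 'l set" where
  "bar L sat X = {a \<in> L. \<forall>x\<in>X. (x, a) \<in> sat}"

definition fC_model :: "'l set \<Rightarrow> 'm set \<Rightarrow> ('m \<times> 'l) set \<Rightarrow> ('m set \<Rightarrow> 'm set) \<Rightarrow> bool" where
  "fC_model L M sat f \<longleftrightarrow>
     sat \<subseteq> M \<times> L \<and>
     (\<forall>X. X \<subseteq> M \<longrightarrow> f X \<subseteq> X) \<and>
     (\<forall>X Y. X \<subseteq> M \<longrightarrow> Y \<subseteq> M \<longrightarrow> f X \<subseteq> Y \<longrightarrow> Y \<subseteq> X \<longrightarrow> f Y = f X)"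

definition C_logic :: "'l set \<Rightarrow> ('l set \<Rightarrow> 'l set) \<Rightarrow> bool" where
  "C_logic L C \<longleftrightarrow>
     (\<forall>A. A \<subseteq> L \<longrightarrow> C A \<subseteq> L) \<and>
     (\<forall>A. A \<subseteq> L \<longrightarrow> A \<subseteq> C A) \<and>
     (\<forall>A B. A \<subseteq> L \<longrightarrow> B \<subseteq> L \<longrightarrow> A \<subseteq> B \<longrightarrow> B \<subseteq> C A \<longrightarrow> C A = C B)"

end

theory Submission
  imports Defs
begin

theorem theorem1:
  fixes L :: "'l set" and M :: "'m set" and sat :: "('m \<times> 'l) set"
    and f :: "'m set \<Rightarrow> 'm set"
  assumes "L \<noteq> {}"
    and "fC_model L M sat f"
  shows "C_logic L (\<lambda>A. bar L sat (f (hat M sat A)))"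
proof -
  have H: "(\<forall>X. X \<subseteq> M \<longrightarrow> f X \<subseteq> X) \<and>
     (\<forall>X Y. X \<subseteq> M \<longrightarrow> Y \<subseteq> M \<longrightarrow> f X \<subseteq> Y \<longrightarrow> Y \<subseteq> X \<longrightarrow> f Y = f X)"
    using assms(2) unfolding fC_model_def by (rule conjunct2)
  have con: "\<And>X. X \<subseteq> M \<Longrightarrow> f X \<subseteq> X"
    using H[THEN conjunct1] by (rule allE) (erule mp)
  have cum: "\<And>X Y. X \<subseteq> M \<Longrightarrow> Y \<subseteq> M \<Longrightarrow> f X \<subseteq> Y \<Longrightarrow> Y \<subseteq> X \<Longrightarrow> f Y = f X"
    using H[THEN conjunct2] by blast
  have hM: "\<And>A. hat M sat A \<subseteq> M" unfolding hat_def by (rule Collect_subset)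
  have incl: "A \<subseteq> bar L sat (f (hat M sat A))" if "A \<subseteq> L" for A
  proof
    fix a assume a: "a \<in> A"
    have "(x, a) \<in> sat" if x: "x \<in> f (hat M sat A)" for x
    proof -
      have "x \<in> hat M sat A" using con[OF hM[of A]] x by (rule subsetD)
      then show ?thesis using a unfolding hat_def by simp
    qed
    moreover have "a \<in> L" using a that by (rule subsetD[rotated])
    ultimately show "a \<in> bar L sat (f (hat M sat A))" unfolding bar_def by simp
  qed
  have cumul: "bar L sat (f (hat M sat A)) = bar L sat (f (hat M sat B))"
    if AB: "A \<subseteq> B" "B \<subseteq> bar L sat (f (hat M sat A))" for A B
  proof -
    have 1: "hat M sat B \<subseteq> hat M sat A" using AB(1) unfolding hat_def by auto
    have 2: "f (hat M sat A) \<subseteq> hat M sat B"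
    proof
      fix x assume x: "x \<in> f (hat M sat A)"
      have "x \<in> hat M sat A" using con[OF hM[of A]] x by (rule subsetD)
      then have "x \<in> M" unfolding hat_def by simp
      moreover have "(x, b) \<in> sat" if b: "b \<in> B" for b
      proof -
        have "b \<in> bar L sat (f (hat M sat A))" using AB(2) b by (rule subsetD)
        then show ?thesis using x unfolding bar_def by simp
      qed
      ultimately show "x \<in> hat M sat B" unfolding hat_def by simp
    qed
    have "f (hat M sat B) = f (hat M sat A)" using cum[OF hM hM 2 1] .
    then show ?thesis by simp
  qed
  have sub: "\<And>A. bar L sat (f (hat M sat A)) \<subseteq> L" unfolding bar_def by (rule Collect_subset)
  show ?thesis unfolding C_logic_def
  proof (intro conjI allI impI)
    fix A :: "'l set" show "bar L sat (f (hat M sat A)) \<subseteq> L" by (rule sub)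
  next
    fix A :: "'l set" assume "A \<subseteq> L" then show "A \<subseteq> bar L sat (f (hat M sat A))" by (rule incl)
  next
    fix A B :: "'l set" assume "A \<subseteq> B" "B \<subseteq> bar L sat (f (hat M sat A))"
    then show "bar L sat (f (hat M sat A)) = bar L sat (f (hat M sat B))" by (rule cumul)
  qed
qed

end
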